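(* Let $f,g\in c_{0,0}(\mathbb{Z})$ and $\alpha>0$. Then $$W^\alpha(f*g)(n)=(W_+^\alpha f_+*g_-)(n)+W_+^\alpha(f_+*g_+)(n)+(f_-*W_+^\alpha g_+)(n),\qquad n\ge0,$$ $$W^\alpha(f*g)(n)=(W_-^\alpha f_-*g_+)(n)+W_-^\alpha(f_-*g_-)(n)+(f_+*W_-^\alpha g_-)(n),\qquad n<0.$$
   Context: $c_{0,0}(\mathbb{Z})$ is the space of finitely supported complex sequences on $\mathbb{Z}$, with convolution $(f*g)(n)=\sum_{j\in\mathbb{Z}}f(n-j)g(j)$. $f_+(n)=f(n)$ for $n\ge0$, $0$ for $n<0$; $f_-(n)=0$ for $n\ge0$, $f(n)$ for $n<0$. For $\gamma\in\mathbb{R}$, $k^\gamma(0)=1$, $k^\gamma(n)=\frac{\gamma(\gamma+1)\cdots(\gamma+n-1)}{n!}$ for $n\ge1$. $W_+f(n)=f(n)-f(n+1)$, $W_-f(n)=f(n)-f(n-1)$, $W_\pm^m$ their powers. For $\alpha>0$: $W_+^{-\alpha}f(n)=\sum_{j\ge n}k^\alpha(j-n)f(j)$, $W_-^{-\alpha}f(n)=\sum_{j\le n}k^\alpha(n-j)f(j)$, $W_\pm^\alpha f=W_\pm^mW_\pm^{-(m-\alpha)}f$ with $m=[\alpha]+1$. Finally $W^\alpha f(n)=W_+^\alpha f(n)$ for $n\ge0$ and $W^\alpha f(n)=W_-^\alpha f(n)$ for $n<0$. *)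

theory Defs
  imports "HOL-Analysis.Analysis"
begin

definition fin_supp :: "(int \<Rightarrow> complex) \<Rightarrow> bool" where
  "fin_supp f \<longleftrightarrow> finite {n. f n \<noteq> 0}"

definition conv :: "(int \<Rightarrow> complex) \<Rightarrow> (int \<Rightarrow> complex) \<Rightarrow> int \<Rightarrow> complex" (infixl "\<star>" 70) where
  "conv f g n = infsum (\<lambda>j. f (n - j) * g j) UNIV"

definition pos_part :: "(int \<Rightarrow> complex) \<Rightarrow> int \<Rightarrow> complex" where
  "pos_part f n = (if n \<ge> 0 then f n else 0)"

definition neg_part :: "(int \<Rightarrow> complex) \<Rightarrow> int \<Rightarrow> complex" where
  "neg_part f n = (if n \<ge> 0 then 0 else f n)"

definition kk :: "real \<Rightarrow> nat \<Rightarrow> real" where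
  "kk \<gamma> n = pochhammer \<gamma> n / fact n"

definition W_plus :: "(int \<Rightarrow> complex) \<Rightarrow> int \<Rightarrow> complex" where
  "W_plus f n = f n - f (n + 1)"

definition W_minus :: "(int \<Rightarrow> complex) \<Rightarrow> int \<Rightarrow> complex" where
  "W_minus f n = f n - f (n - 1)"

definition W_plus_neg :: "real \<Rightarrow> (int \<Rightarrow> complex) \<Rightarrow> int \<Rightarrow> complex" where
  "W_plus_neg \<alpha> f n = infsum (\<lambda>j. complex_of_real (kk \<alpha> (nat (j - n))) * f j) {n..}"

definition W_minus_neg :: "real \<Rightarrow> (int \<Rightarrow> complex) \<Rightarrow> int \<Rightarrow> complex" where
  "W_minus_neg \<alpha> f n = infsum (\<lambda>j. complex_of_real (kk \<alpha> (nat (n - j))) * f j) {..n}"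

definition W_plus_frac :: "real \<Rightarrow> (int \<Rightarrow> complex) \<Rightarrow> int \<Rightarrow> complex" where
  "W_plus_frac \<alpha> f = (W_plus ^^ (nat \<lfloor>\<alpha>\<rfloor> + 1)) (W_plus_neg (real (nat \<lfloor>\<alpha>\<rfloor> + 1) - \<alpha>) f)"

definition W_minus_frac :: "real \<Rightarrow> (int \<Rightarrow> complex) \<Rightarrow> int \<Rightarrow> complex" where
  "W_minus_frac \<alpha> f = (W_minus ^^ (nat \<lfloor>\<alpha>\<rfloor> + 1)) (W_minus_neg (real (nat \<lfloor>\<alpha>\<rfloor> + 1) - \<alpha>) f)"

definition W_frac :: "real \<Rightarrow> (int \<Rightarrow> complex) \<Rightarrow> int \<Rightarrow> complex" where
  "W_frac \<alpha> f n = (if n \<ge> 0 then W_plus_frac \<alpha> f n else W_minus_frac \<alpha> f n)"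

end

theory Submission
  imports Defs
begin

lemma fs_summable:
  fixes h :: "int \<Rightarrow> complex"
  assumes "fin_supp h" shows "h summable_on A"
proof -
  have "h summable_on (A \<inter> {x. h x \<noteq> 0})"
    using assms unfolding fin_supp_def by (intro summable_on_finite) auto
  moreover have "h summable_on A \<longleftrightarrow> h summable_on (A \<inter> {x. h x \<noteq> 0})"
    by (rule summable_on_cong_neutral) auto
  ultimately show ?thesis by simp
qed

lemma infsum_supp:
  fixes h :: "int \<Rightarrow> complex"
  assumes "finite U" "\<And>x. x \<in> A \<Longrightarrow> x \<notin> U \<Longrightarrow> h x = 0"
  shows "infsum h A = sum h (A \<inter> U)"
proof -
  have "infsum h A = infsum h (A \<inter> U)"
    by (rule infsum_cong_neutral) (use assms in auto)
  also have "\<dots> = sum h (A \<inter> U)" using assms(1) by simp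
  finally show ?thesis .
qed

lemma fin_supp_add:
  assumes "fin_supp a" "fin_supp b"
  shows "fin_supp (\<lambda>n. a n + b n)"
proof -
  have "{n. a n + b n \<noteq> 0} \<subseteq> {n. a n \<noteq> 0} \<union> {n. b n \<noteq> 0}" by auto
  then show ?thesis using assms unfolding fin_supp_def by (meson finite_Un finite_subset)
qed

lemma fin_supp_mult:
  assumes "fin_supp a"
  shows "fin_supp (\<lambda>n. c n * a n)"
proof -
  have "{n. c n * a n \<noteq> 0} \<subseteq> {n. a n \<noteq> 0}" by auto
  then show ?thesis using assms unfolding fin_supp_def by (meson finite_subset)
qed

lemma infsum_fsum:
  fixes h :: "int \<Rightarrow> int \<Rightarrow> complex"
  assumes "finite S" "\<And>j. j \<in> S \<Longrightarrow> fin_supp (h j)"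
  shows "infsum (\<lambda>i. \<Sum>j\<in>S. h j i) A = (\<Sum>j\<in>S. infsum (h j) A)"
  using assms
proof (induction S rule: finite_induct)
  case empty then show ?case by simp
next
  case (insert x F)
  have s1: "h x summable_on A" using insert by (intro fs_summable) auto
  have fF: "finite (\<Union>j\<in>F. {i. h j i \<noteq> 0})"
    using insert unfolding fin_supp_def by auto
  have "{i. (\<Sum>j\<in>F. h j i) \<noteq> 0} \<subseteq> (\<Union>j\<in>F. {i. h j i \<noteq> 0})"
  proof
    fix i assume "i \<in> {i. (\<Sum>j\<in>F. h j i) \<noteq> 0}"
    then have "\<exists>j\<in>F. h j i \<noteq> 0" using sum.neutral by force
    then show "i \<in> (\<Union>j\<in>F. {i. h j i \<noteq> 0})" by auto
  qed
  then have "fin_supp (\<lambda>i. \<Sum>j\<in>F. h j i)" unfolding fin_supp_def using fF finite_subset by blast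
  then have s2: "(\<lambda>i. \<Sum>j\<in>F. h j i) summable_on A" by (rule fs_summable)
  have "infsum (\<lambda>i. \<Sum>j\<in>insert x F. h j i) A = infsum (\<lambda>i. h x i + (\<Sum>j\<in>F. h j i)) A"
    using insert by simp
  also have "\<dots> = infsum (h x) A + infsum (\<lambda>i. \<Sum>j\<in>F. h j i) A"
    by (rule infsum_add[OF s1 s2])
  also have "\<dots> = (\<Sum>j\<in>insert x F. infsum (h j) A)" using insert by simp
  finally show ?case .
qed

lemma conv_right:
  assumes "finite S" "\<And>j. j \<notin> S \<Longrightarrow> g j = 0"
  shows "(F \<star> g) n = (\<Sum>j\<in>S. F (n - j) * g j)"
  unfolding conv_def using infsum_supp[OF assms(1), of UNIV "\<lambda>j. F (n - j) * g j"] assms(2)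
  by simp

lemma conv_right_fs:
  assumes "fin_supp g"
  shows "(F \<star> g) n = (\<Sum>j\<in>{j. g j \<noteq> 0}. F (n - j) * g j)"
  using assms unfolding fin_supp_def by (intro conv_right) auto

lemma conv_comm: "F \<star> G = G \<star> F"
proof (rule ext)
  fix n :: int
  have b: "bij_betw (\<lambda>k. n - k) UNIV (UNIV::int set)"
    by (rule bij_betw_byWitness[where f'="\<lambda>k. n - k"]) auto
  have "(G \<star> F) n = infsum (\<lambda>k. (\<lambda>j. F (n - j) * G j) (n - k)) UNIV"
    unfolding conv_def by (simp add: mult.commute)
  also have "\<dots> = (F \<star> G) n"
    unfolding conv_def by (rule infsum_reindex_bij_betw[OF b])
  finally show "(F \<star> G) n = (G \<star> F) n" by simp
qed

lemma conv_fin_supp: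
  assumes "fin_supp F" "fin_supp g"
  shows "fin_supp (F \<star> g)"
proof -
  let ?T = "{x. F x \<noteq> 0}" and ?S = "{x. g x \<noteq> 0}"
  have "{n. (F \<star> g) n \<noteq> 0} \<subseteq> (\<lambda>(a,b). a + b) ` (?T \<times> ?S)"
  proof
    fix n assume "n \<in> {n. (F \<star> g) n \<noteq> 0}"
    then have "(\<Sum>j\<in>?S. F (n - j) * g j) \<noteq> 0" using conv_right_fs[OF assms(2)] by simp
    then obtain j where "j \<in> ?S" "F (n - j) \<noteq> 0" using sum.neutral by force
    then have "(n - j, j) \<in> ?T \<times> ?S" by auto
    then show "n \<in> (\<lambda>(a,b). a + b) ` (?T \<times> ?S)" by (intro image_eqI[of _ _ "(n-j,j)"]) auto
  qed
  moreover have "finite ((\<lambda>(a,b). a + b) ` (?T \<times> ?S))"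
    using assms unfolding fin_supp_def by auto
  ultimately show ?thesis unfolding fin_supp_def using finite_subset by blast
qed

lemma conv_add_left:
  assumes "fin_supp g"
  shows "(\<lambda>i. A i + B i) \<star> g = (\<lambda>n. (A \<star> g) n + (B \<star> g) n)"
  by (rule ext) (simp add: conv_right_fs[OF assms] sum.distrib ring_distribs)

lemma conv_add_right:
  assumes "fin_supp g1" "fin_supp g2"
  shows "F \<star> (\<lambda>i. g1 i + g2 i) = (\<lambda>n. (F \<star> g1) n + (F \<star> g2) n)"
proof (rule ext)
  fix n :: int
  let ?S = "{j. g1 j \<noteq> 0} \<union> {j. g2 j \<noteq> 0}"
  have fS: "finite ?S" using assms unfolding fin_supp_def by auto
  show "(F \<star> (\<lambda>i. g1 i + g2 i)) n = (F \<star> g1) n + (F \<star> g2) n"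
    using conv_right[OF fS, of g1 F n] conv_right[OF fS, of g2 F n]
      conv_right[OF fS, of "\<lambda>i. g1 i + g2 i" F n]
    by (simp add: sum.distrib ring_distribs)
qed

lemma Wp_conv:
  assumes "fin_supp g"
  shows "W_plus (H \<star> g) = W_plus H \<star> g"
proof (rule ext)
  fix n :: int
  have e: "\<And>j. n + 1 - j = n - j + 1" by simp
  show "W_plus (H \<star> g) n = (W_plus H \<star> g) n"
    unfolding W_plus_def conv_right_fs[OF assms]
    by (simp add: e sum_subtractf[symmetric] left_diff_distrib)
qed

lemma Wp_pow_conv:
  assumes "fin_supp g"
  shows "(W_plus ^^ m) (H \<star> g) = (W_plus ^^ m) H \<star> g"
  by (induction m) (simp_all add: Wp_conv[OF assms])

lemma Wpn_conv:
  assumes "fin_supp F" "fin_supp g"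
  shows "W_plus_neg \<beta> (F \<star> g) = W_plus_neg \<beta> F \<star> g"
proof (rule ext)
  fix n :: int
  let ?S = "{j. g j \<noteq> 0}"
  have fS: "finite ?S" using assms unfolding fin_supp_def by auto
  let ?c = "\<lambda>i. complex_of_real (kk \<beta> (nat (i - n)))"
  have "W_plus_neg \<beta> (F \<star> g) n = infsum (\<lambda>i. \<Sum>j\<in>?S. ?c i * (F (i - j) * g j)) {n..}"
    unfolding W_plus_neg_def conv_right_fs[OF assms(2)] by (simp add: sum_distrib_left)
  also have "\<dots> = (\<Sum>j\<in>?S. infsum (\<lambda>i. ?c i * (F (i - j) * g j)) {n..})"
  proof (rule infsum_fsum[OF fS])
    fix j
    have "fin_supp (\<lambda>i. F (i - j))"
    proof -
      have "{i. F (i - j) \<noteq> 0} = (\<lambda>k. k + j) ` {k. F k \<noteq> 0}"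
        by (auto intro: image_eqI[of _ _ "_ - j"])
      then show ?thesis using assms(1) unfolding fin_supp_def by simp
    qed
    then have "fin_supp (\<lambda>i. (?c i * g j) * F (i - j))" by (rule fin_supp_mult)
    then show "fin_supp (\<lambda>i. ?c i * (F (i - j) * g j))" by (simp add: ac_simps)
  qed
  also have "\<dots> = (\<Sum>j\<in>?S. W_plus_neg \<beta> F (n - j) * g j)"
  proof (rule sum.cong[OF refl])
    fix j
    have b: "bij_betw (\<lambda>k. k + j) {n - j..} {n..}"
      by (rule bij_betw_byWitness[where f'="\<lambda>k. k - j"]) auto
    have "infsum (\<lambda>i. ?c i * (F (i - j) * g j)) {n..}
        = infsum (\<lambda>k. (\<lambda>i. ?c i * (F (i - j) * g j)) (k + j)) {n - j..}"
      by (rule infsum_reindex_bij_betw[OF b, symmetric])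
    also have "\<dots> = infsum (\<lambda>k. (complex_of_real (kk \<beta> (nat (k - (n - j)))) * F k) * g j) {n - j..}"
      by (rule infsum_cong) (simp add: algebra_simps)
    also have "\<dots> = W_plus_neg \<beta> F (n - j) * g j"
      unfolding W_plus_neg_def by (rule infsum_cmult_left')
    finally show "infsum (\<lambda>i. ?c i * (F (i - j) * g j)) {n..} = W_plus_neg \<beta> F (n - j) * g j" .
  qed
  also have "\<dots> = (W_plus_neg \<beta> F \<star> g) n" by (simp add: conv_right_fs[OF assms(2)])
  finally show "W_plus_neg \<beta> (F \<star> g) n = (W_plus_neg \<beta> F \<star> g) n" .
qed

lemma Wpf_conv:
  assumes "fin_supp F" "fin_supp g"
  shows "W_plus_frac \<alpha> (F \<star> g) = W_plus_frac \<alpha> F \<star> g"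
  unfolding W_plus_frac_def Wpn_conv[OF assms] Wp_pow_conv[OF assms(2)] by (rule refl)

lemma Wp_pow_lin:
  "(W_plus ^^ m) (\<lambda>i. A i + B i) = (\<lambda>n. (W_plus ^^ m) A n + (W_plus ^^ m) B n)"
  by (induction m) (simp_all add: W_plus_def fun_eq_iff)

lemma Wpn_lin:
  assumes "fin_supp A" "fin_supp B"
  shows "W_plus_neg \<beta> (\<lambda>i. A i + B i) = (\<lambda>n. W_plus_neg \<beta> A n + W_plus_neg \<beta> B n)"
proof (rule ext)
  fix n :: int
  let ?c = "\<lambda>i. complex_of_real (kk \<beta> (nat (i - n)))"
  have s1: "(\<lambda>i. ?c i * A i) summable_on {n..}" by (intro fs_summable fin_supp_mult assms)
  have s2: "(\<lambda>i. ?c i * B i) summable_on {n..}" by (intro fs_summable fin_supp_mult assms)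
  show "W_plus_neg \<beta> (\<lambda>i. A i + B i) n = W_plus_neg \<beta> A n + W_plus_neg \<beta> B n"
    unfolding W_plus_neg_def using infsum_add[OF s1 s2] by (simp add: ring_distribs)
qed

lemma Wpf_lin:
  assumes "fin_supp A" "fin_supp B"
  shows "W_plus_frac \<alpha> (\<lambda>i. A i + B i) n = W_plus_frac \<alpha> A n + W_plus_frac \<alpha> B n"
  unfolding W_plus_frac_def Wpn_lin[OF assms] Wp_pow_lin by (rule refl)

lemma Wp_pow_vanish:
  assumes "\<And>k. k \<ge> 0 \<Longrightarrow> G k = 0"
  shows "\<forall>k\<ge>0. (W_plus ^^ m) G k = 0"
  by (induction m) (simp_all add: assms W_plus_def)

lemma Wpf_vanish:
  assumes "\<And>k. k \<ge> 0 \<Longrightarrow> H k = 0" "n \<ge> 0"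
  shows "W_plus_frac \<alpha> H n = 0"
proof -
  have "\<And>k. k \<ge> 0 \<Longrightarrow> W_plus_neg \<beta> H k = 0" for \<beta>
    unfolding W_plus_neg_def by (rule infsum_0) (simp add: assms)
  then show ?thesis unfolding W_plus_frac_def using Wp_pow_vanish assms(2) by blast
qed

lemma Wm_conv:
  assumes "fin_supp g"
  shows "W_minus (H \<star> g) = W_minus H \<star> g"
proof (rule ext)
  fix n :: int
  have e: "\<And>j. n - 1 - j = n - j - 1" by simp
  show "W_minus (H \<star> g) n = (W_minus H \<star> g) n"
    unfolding W_minus_def conv_right_fs[OF assms]
    by (simp add: e sum_subtractf[symmetric] left_diff_distrib)
qed

lemma Wm_pow_conv:
  assumes "fin_supp g"
  shows "(W_minus ^^ m) (H \<star> g) = (W_minus ^^ m) H \<star> g"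
  by (induction m) (simp_all add: Wm_conv[OF assms])

lemma Wmn_conv:
  assumes "fin_supp F" "fin_supp g"
  shows "W_minus_neg \<beta> (F \<star> g) = W_minus_neg \<beta> F \<star> g"
proof (rule ext)
  fix n :: int
  let ?S = "{j. g j \<noteq> 0}"
  have fS: "finite ?S" using assms unfolding fin_supp_def by auto
  let ?c = "\<lambda>i. complex_of_real (kk \<beta> (nat (n - i)))"
  have "W_minus_neg \<beta> (F \<star> g) n = infsum (\<lambda>i. \<Sum>j\<in>?S. ?c i * (F (i - j) * g j)) {..n}"
    unfolding W_minus_neg_def conv_right_fs[OF assms(2)] by (simp add: sum_distrib_left)
  also have "\<dots> = (\<Sum>j\<in>?S. infsum (\<lambda>i. ?c i * (F (i - j) * g j)) {..n})"
  proof (rule infsum_fsum[OF fS])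
    fix j
    have "fin_supp (\<lambda>i. F (i - j))"
    proof -
      have "{i. F (i - j) \<noteq> 0} = (\<lambda>k. k + j) ` {k. F k \<noteq> 0}"
        by (auto intro: image_eqI[of _ _ "_ - j"])
      then show ?thesis using assms(1) unfolding fin_supp_def by simp
    qed
    then have "fin_supp (\<lambda>i. (?c i * g j) * F (i - j))" by (rule fin_supp_mult)
    then show "fin_supp (\<lambda>i. ?c i * (F (i - j) * g j))" by (simp add: ac_simps)
  qed
  also have "\<dots> = (\<Sum>j\<in>?S. W_minus_neg \<beta> F (n - j) * g j)"
  proof (rule sum.cong[OF refl])
    fix j
    have b: "bij_betw (\<lambda>k. k + j) {..n - j} {..n}"
      by (rule bij_betw_byWitness[where f'="\<lambda>k. k - j"]) auto
    have "infsum (\<lambda>i. ?c i * (F (i - j) * g j)) {..n}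
        = infsum (\<lambda>k. (\<lambda>i. ?c i * (F (i - j) * g j)) (k + j)) {..n - j}"
      by (rule infsum_reindex_bij_betw[OF b, symmetric])
    also have "\<dots> = infsum (\<lambda>k. (complex_of_real (kk \<beta> (nat ((n - j) - k))) * F k) * g j) {..n - j}"
      by (rule infsum_cong) (simp add: algebra_simps)
    also have "\<dots> = W_minus_neg \<beta> F (n - j) * g j"
      unfolding W_minus_neg_def by (rule infsum_cmult_left')
    finally show "infsum (\<lambda>i. ?c i * (F (i - j) * g j)) {..n} = W_minus_neg \<beta> F (n - j) * g j" .
  qed
  also have "\<dots> = (W_minus_neg \<beta> F \<star> g) n" by (simp add: conv_right_fs[OF assms(2)])
  finally show "W_minus_neg \<beta> (F \<star> g) n = (W_minus_neg \<beta> F \<star> g) n" .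
qed

lemma Wmf_conv:
  assumes "fin_supp F" "fin_supp g"
  shows "W_minus_frac \<alpha> (F \<star> g) = W_minus_frac \<alpha> F \<star> g"
  unfolding W_minus_frac_def Wmn_conv[OF assms] Wm_pow_conv[OF assms(2)] by (rule refl)

lemma Wm_pow_lin:
  "(W_minus ^^ m) (\<lambda>i. A i + B i) = (\<lambda>n. (W_minus ^^ m) A n + (W_minus ^^ m) B n)"
  by (induction m) (simp_all add: W_minus_def fun_eq_iff)

lemma Wmn_lin:
  assumes "fin_supp A" "fin_supp B"
  shows "W_minus_neg \<beta> (\<lambda>i. A i + B i) = (\<lambda>n. W_minus_neg \<beta> A n + W_minus_neg \<beta> B n)"
proof (rule ext)
  fix n :: int
  let ?c = "\<lambda>i. complex_of_real (kk \<beta> (nat (n - i)))"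
  have s1: "(\<lambda>i. ?c i * A i) summable_on {..n}" by (intro fs_summable fin_supp_mult assms)
  have s2: "(\<lambda>i. ?c i * B i) summable_on {..n}" by (intro fs_summable fin_supp_mult assms)
  show "W_minus_neg \<beta> (\<lambda>i. A i + B i) n = W_minus_neg \<beta> A n + W_minus_neg \<beta> B n"
    unfolding W_minus_neg_def using infsum_add[OF s1 s2] by (simp add: ring_distribs)
qed

lemma Wmf_lin:
  assumes "fin_supp A" "fin_supp B"
  shows "W_minus_frac \<alpha> (\<lambda>i. A i + B i) n = W_minus_frac \<alpha> A n + W_minus_frac \<alpha> B n"
  unfolding W_minus_frac_def Wmn_lin[OF assms] Wm_pow_lin by (rule refl)

lemma Wm_pow_vanish:
  assumes "\<And>k. k < 0 \<Longrightarrow> G k = 0"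
  shows "\<forall>k<0. (W_minus ^^ m) G k = 0"
  by (induction m) (simp_all add: assms W_minus_def)

lemma Wmf_vanish:
  assumes "\<And>k. k < 0 \<Longrightarrow> H k = 0" "n < 0"
  shows "W_minus_frac \<alpha> H n = 0"
proof -
  have "\<And>k. k < 0 \<Longrightarrow> W_minus_neg \<beta> H k = 0" for \<beta>
    unfolding W_minus_neg_def by (rule infsum_0) (simp add: assms)
  then show ?thesis unfolding W_minus_frac_def using Wm_pow_vanish assms(2) by blast
qed

lemma pos_fs: "fin_supp f \<Longrightarrow> fin_supp (pos_part f)"
  unfolding fin_supp_def pos_part_def by (erule finite_subset[rotated]) auto

lemma neg_fs: "fin_supp f \<Longrightarrow> fin_supp (neg_part f)"
  unfolding fin_supp_def neg_part_def by (erule finite_subset[rotated]) auto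

lemma split_pn: "f = (\<lambda>i. pos_part f i + neg_part f i)"
  by (simp add: pos_part_def neg_part_def fun_eq_iff)

theorem lemma2p10:
  fixes f g :: "int \<Rightarrow> complex" and \<alpha> :: real
  assumes "fin_supp f" and "fin_supp g" and "\<alpha> > 0"
  shows "(\<forall>n\<ge>0. W_frac \<alpha> (f \<star> g) n =
            (W_plus_frac \<alpha> (pos_part f) \<star> neg_part g) n
          + W_plus_frac \<alpha> (pos_part f \<star> pos_part g) n
          + (neg_part f \<star> W_plus_frac \<alpha> (pos_part g)) n)
      \<and> (\<forall>n<0. W_frac \<alpha> (f \<star> g) n =
            (W_minus_frac \<alpha> (neg_part f) \<star> pos_part g) n
          + W_minus_frac \<alpha> (neg_part f \<star> neg_part g) n
          + (pos_part f \<star> W_minus_frac \<alpha> (neg_part g)) n)"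
proof -
  define fp where "fp = pos_part f"
  define fm where "fm = neg_part f"
  define gp where "gp = pos_part g"
  define gm where "gm = neg_part g"
  have fs: "fin_supp fp" "fin_supp fm" "fin_supp gp" "fin_supp gm"
    using assms pos_fs neg_fs unfolding fp_def fm_def gp_def gm_def by auto
  have fsc: "fin_supp (fp \<star> gp)" "fin_supp (fp \<star> gm)" "fin_supp (fm \<star> gp)" "fin_supp (fm \<star> gm)"
    using fs by (auto intro: conv_fin_supp)
  have fg: "f \<star> g = (\<lambda>n. (((fp \<star> gp) n + (fp \<star> gm) n) + (fm \<star> gp) n) + (fm \<star> gm) n)"
  proof -
    have "f \<star> g = (\<lambda>i. fp i + fm i) \<star> (\<lambda>i. gp i + gm i)"
      unfolding fp_def fm_def gp_def gm_def using split_pn by metis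
    also have "\<dots> = (\<lambda>n. (fp \<star> (\<lambda>i. gp i + gm i)) n + (fm \<star> (\<lambda>i. gp i + gm i)) n)"
      by (rule conv_add_left) (intro fin_supp_add fs)
    also have "\<dots> = (\<lambda>n. (((fp \<star> gp) n + (fp \<star> gm) n) + (fm \<star> gp) n) + (fm \<star> gm) n)"
      by (simp add: conv_add_right[OF fs(3,4)] add.assoc)
    finally show ?thesis .
  qed
  have fs2: "fin_supp (\<lambda>n. (fp \<star> gp) n + (fp \<star> gm) n)"
    by (intro fin_supp_add fsc)
  have fs3: "fin_supp (\<lambda>n. ((fp \<star> gp) n + (fp \<star> gm) n) + (fm \<star> gp) n)"
    by (intro fin_supp_add fsc fs2)
  have v1: "(fm \<star> gm) k = 0" if "k \<ge> 0" for k
    unfolding conv_def using that by (intro infsum_0) (simp add: fm_def gm_def neg_part_def)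
  have v2: "(fp \<star> gp) k = 0" if "k < 0" for k
    unfolding conv_def using that by (intro infsum_0) (simp add: fp_def gp_def pos_part_def)
  have P: "W_frac \<alpha> (f \<star> g) n =
            (W_plus_frac \<alpha> fp \<star> gm) n + W_plus_frac \<alpha> (fp \<star> gp) n + (fm \<star> W_plus_frac \<alpha> gp) n"
    if "n \<ge> 0" for n
  proof -
    have "W_frac \<alpha> (f \<star> g) n = W_plus_frac \<alpha> (f \<star> g) n" using that by (simp add: W_frac_def)
    also have "\<dots> = W_plus_frac \<alpha> (fp \<star> gp) n + W_plus_frac \<alpha> (fp \<star> gm) n
                 + W_plus_frac \<alpha> (fm \<star> gp) n + W_plus_frac \<alpha> (fm \<star> gm) n"
      unfolding fg by (simp add: Wpf_lin fs2 fs3 fsc)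
    also have "W_plus_frac \<alpha> (fm \<star> gm) n = 0" using Wpf_vanish v1 that by blast
    also have "W_plus_frac \<alpha> (fp \<star> gm) = W_plus_frac \<alpha> fp \<star> gm" by (rule Wpf_conv[OF fs(1,4)])
    also have "W_plus_frac \<alpha> (fm \<star> gp) = fm \<star> W_plus_frac \<alpha> gp"
      by (metis conv_comm Wpf_conv[OF fs(3,2)])
    finally show ?thesis by simp
  qed
  have M: "W_frac \<alpha> (f \<star> g) n =
            (W_minus_frac \<alpha> fm \<star> gp) n + W_minus_frac \<alpha> (fm \<star> gm) n + (fp \<star> W_minus_frac \<alpha> gm) n"
    if "n < 0" for n
  proof -
    have "W_frac \<alpha> (f \<star> g) n = W_minus_frac \<alpha> (f \<star> g) n" using that by (simp add: W_frac_def)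
    also have "\<dots> = W_minus_frac \<alpha> (fp \<star> gp) n + W_minus_frac \<alpha> (fp \<star> gm) n
                 + W_minus_frac \<alpha> (fm \<star> gp) n + W_minus_frac \<alpha> (fm \<star> gm) n"
      unfolding fg by (simp add: Wmf_lin fs2 fs3 fsc)
    also have "W_minus_frac \<alpha> (fp \<star> gp) n = 0" using Wmf_vanish v2 that by blast
    also have "W_minus_frac \<alpha> (fm \<star> gp) = W_minus_frac \<alpha> fm \<star> gp" by (rule Wmf_conv[OF fs(2,3)])
    also have "W_minus_frac \<alpha> (fp \<star> gm) = fp \<star> W_minus_frac \<alpha> gm"
      by (metis conv_comm Wmf_conv[OF fs(4,1)])
    finally show ?thesis by simp
  qed
  show ?thesis using P M unfolding fp_def fm_def gp_def gm_def by blast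
qed

end
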